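(* Let $\ln_G:(0,\infty)\to\mathbb{R}$ be a continuous, strictly increasing, strictly concave function with $\ln_G(1)=0$, let $0<\alpha<1$, and for probability distributions $p=(p_1,\dots,p_W)$ define $Z_{G,\alpha}(p):=\frac{\ln_G(\sum_{i=1}^W p_i^{\alpha})}{1-\alpha}$. Then $Z_{G,\alpha}$ satisfies: (SK1) it is continuous in all arguments $p_1,\dots,p_W$; (SK2) it attains its maximum value over the probability simplex at the uniform distribution $p_i=1/W$ (indeed it is strictly concave); (SK3) $Z_{G,\alpha}(p_1,\dots,p_W,0)=Z_{G,\alpha}(p_1,\dots,p_W)$. *)

theory Defs
  imports "HOL-Analysis.Analysis"
begin

definition strict_concave_on_real :: "real set \<Rightarrow> (real \<Rightarrow> real) \<Rightarrow> bool" where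
  "strict_concave_on_real S f \<longleftrightarrow> convex S \<and>
     (\<forall>x\<in>S. \<forall>y\<in>S. x \<noteq> y \<longrightarrow> (\<forall>t::real. 0 < t \<and> t < 1 \<longrightarrow>
        f (t * x + (1 - t) * y) > t * f x + (1 - t) * f y))"

text \<open>Probability distributions (p_0,...,p_{W-1}) on W outcomes, represented as the
  first W coordinates of a function nat => real; other coordinates are ignored.\<close>
definition prob_simplex :: "nat \<Rightarrow> (nat \<Rightarrow> real) set" where
  "prob_simplex W = {p. (\<forall>i<W. 0 \<le> p i) \<and> (\<Sum>i<W. p i) = 1}"

definition Z_G :: "(real \<Rightarrow> real) \<Rightarrow> real \<Rightarrow> nat \<Rightarrow> (nat \<Rightarrow> real) \<Rightarrow> real" where
  "Z_G lnG \<alpha> W p = lnG (\<Sum>i<W. p i powr \<alpha>) / (1 - \<alpha>)"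

end

theory Submission
  imports Defs
begin

lemma ln_strict_aux: "0 < (y::real) \<Longrightarrow> y \<noteq> 1 \<Longrightarrow> ln y < y - 1"
  using ln_le_minus_one[of y] ln_eq_minus_one[of y] by fastforce

lemma bern_strict:
  fixes z a :: real
  assumes "0 \<le> z" "z \<noteq> 1" "0 < a" "a < 1"
  shows "z powr a < 1 + a * (z - 1)"
proof (cases "z = 0")
  case True then show ?thesis using assms by simp
next
  case False
  hence z: "0 < z" using assms by simp
  define c where "c = a * z + (1 - a)"
  have c: "0 < c" using z assms unfolding c_def by (simp add: add_pos_pos)
  have zc: "z \<noteq> c"
  proof
    assume "z = c"
    hence "z * (1 - a) = 1 - a" unfolding c_def by (simp add: algebra_simps)
    thus False using assms by simp
  qed
  have "z / c \<noteq> 1" using zc c by simp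
  hence 1: "ln (z / c) < z / c - 1" using ln_strict_aux[of "z/c"] z c by simp
  have 2: "ln (1 / c) \<le> 1 / c - 1" using ln_le_minus_one[of "1/c"] c by simp
  have "a * ln (z / c) + (1 - a) * ln (1 / c) < a * (z / c - 1) + (1 - a) * (1 / c - 1)"
    using 1 2 assms by (intro add_less_le_mono) auto
  also have "\<dots> = 0" using c unfolding c_def by (simp add: field_simps)
  finally have "a * ln z < ln c"
    using z c by (simp add: ln_div algebra_simps)
  hence "exp (a * ln z) < c" using c by (metis exp_less_cancel_iff exp_ln)
  thus ?thesis using z unfolding powr_def c_def by (simp add: algebra_simps)
qed

lemma tangent_strict:
  fixes x m a :: real
  assumes "0 \<le> x" "0 < m" "x \<noteq> m" "0 < a" "a < 1"
  shows "x powr a < m powr a * (1 + a * (x / m - 1))"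
proof -
  have "(x/m) powr a < 1 + a * (x / m - 1)"
    using bern_strict[of "x/m" a] assms by simp
  hence "m powr a * (x/m) powr a < m powr a * (1 + a * (x / m - 1))"
    using assms by simp
  thus ?thesis using assms by (simp add: powr_divide)
qed

lemma tangent_le:
  fixes x m a :: real
  assumes "0 \<le> x" "0 < m" "0 < a" "a < 1"
  shows "x powr a \<le> m powr a * (1 + a * (x / m - 1))"
  using tangent_strict[OF assms(1,2) _ assms(3,4)] assms by (cases "x = m") auto

lemma powr_strict_concave:
  fixes x y t a :: real
  assumes "0 \<le> x" "0 \<le> y" "x \<noteq> y" "0 < t" "t < 1" "0 < a" "a < 1"
  shows "t * x powr a + (1 - t) * y powr a < (t * x + (1 - t) * y) powr a"
proof -
  define m where "m = t * x + (1 - t) * y"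
  have m: "0 < m"
  proof -
    have "0 < x \<or> 0 < y" using assms by auto
    thus ?thesis unfolding m_def using assms
      by (smt (verit) mult_nonneg_nonneg mult_pos_pos)
  qed
  have xm: "x \<noteq> m"
  proof
    assume "x = m" hence "(1 - t) * (x - y) = 0" unfolding m_def by (simp add: algebra_simps)
    thus False using assms by simp
  qed
  have ym: "y \<noteq> m"
  proof
    assume "y = m" hence "t * (x - y) = 0" unfolding m_def by (auto simp: algebra_simps)
    thus False using assms by auto
  qed
  have 1: "x powr a < m powr a * (1 + a * (x / m - 1))" using tangent_strict assms m xm by simp
  have 2: "y powr a < m powr a * (1 + a * (y / m - 1))" using tangent_strict assms m ym by simp
  have "t * x powr a + (1 - t) * y powr a <
      t * (m powr a * (1 + a * (x / m - 1))) + (1 - t) * (m powr a * (1 + a * (y / m - 1)))"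
    using 1 2 assms by (intro add_strict_mono mult_strict_left_mono) auto
  also have "\<dots> = m powr a * (1 + a * ((t * x + (1 - t) * y) / m - 1))"
    using m by (simp add: field_simps)
  also have "\<dots> = m powr a" using m unfolding m_def by simp
  finally show ?thesis unfolding m_def .
qed

lemma powr_concave_le:
  fixes x y t a :: real
  assumes "0 \<le> x" "0 \<le> y" "0 < t" "t < 1" "0 < a" "a < 1"
  shows "t * x powr a + (1 - t) * y powr a \<le> (t * x + (1 - t) * y) powr a"
  using powr_strict_concave[OF assms(1,2) _ assms(3-6)] by (cases "x = y") (auto simp: algebra_simps)

lemma S_pos:
  assumes "p \<in> prob_simplex W"
  shows "0 < (\<Sum>i<W. p i powr a)"
proof -
  have "\<exists>i<W. 0 < p i"
  proof (rule ccontr)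
    assume "\<not> ?thesis"
    hence "\<forall>i<W. p i \<le> 0" by auto
    hence "(\<Sum>i<W. p i) \<le> 0" by (intro sum_nonpos) auto
    thus False using assms by (simp add: prob_simplex_def)
  qed
  then obtain i where "i < W" "0 < p i" by auto
  thus ?thesis by (intro sum_pos2[of _ i]) auto
qed

theorem mainTheorem6:
  fixes lnG :: "real \<Rightarrow> real" and \<alpha> :: real and W :: nat
  assumes cont: "continuous_on {0<..} lnG"
    and incr: "strict_mono_on {0<..} lnG"
    and conc: "strict_concave_on_real {0<..} lnG"
    and one: "lnG 1 = 0"
    and alpha: "0 < \<alpha>" "\<alpha> < 1"
    and W: "1 \<le> W"
  shows "continuous_on (prob_simplex W) (Z_G lnG \<alpha> W)
    \<and> (\<lambda>i. 1 / real W) \<in> prob_simplex W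
    \<and> (\<forall>p\<in>prob_simplex W. Z_G lnG \<alpha> W p \<le> Z_G lnG \<alpha> W (\<lambda>i. 1 / real W))
    \<and> (\<forall>p\<in>prob_simplex W. \<forall>q\<in>prob_simplex W. (\<exists>i<W. p i \<noteq> q i) \<longrightarrow>
         (\<forall>t::real. 0 < t \<and> t < 1 \<longrightarrow>
            Z_G lnG \<alpha> W (\<lambda>i. t * p i + (1 - t) * q i)
              > t * Z_G lnG \<alpha> W p + (1 - t) * Z_G lnG \<alpha> W q))
    \<and> (\<forall>p\<in>prob_simplex W. Z_G lnG \<alpha> (Suc W) (p(W := 0)) = Z_G lnG \<alpha> W p)"
proof (intro conjI ballI allI impI)
  define S where "S = (\<lambda>p::nat\<Rightarrow>real. \<Sum>i<W. p i powr \<alpha>)"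
  have ZS: "Z_G lnG \<alpha> W = (\<lambda>p. lnG (S p) / (1 - \<alpha>))"
    unfolding Z_G_def S_def by auto
  have mono: "lnG x \<le> lnG y" if "0 < x" "x \<le> y" for x y
    using incr that by (cases "x = y") (auto simp: strict_mono_on_def intro: less_imp_le)
  have Sc: "continuous_on (prob_simplex W) S"
    unfolding S_def
    by (intro continuous_intros continuous_on_powr')
       (auto simp: prob_simplex_def alpha continuous_on_subset[OF continuous_on_product_coordinates])
  have "continuous_on (prob_simplex W) (\<lambda>p. lnG (S p))"
    by (rule continuous_on_compose2[OF cont Sc]) (auto simp: S_def intro: S_pos)
  thus "continuous_on (prob_simplex W) (Z_G lnG \<alpha> W)"
    unfolding ZS using alpha by (intro continuous_intros) auto
  show U: "(\<lambda>i. 1 / real W) \<in> prob_simplex W"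
    using W by (simp add: prob_simplex_def)
  {
    fix p assume p: "p \<in> prob_simplex W"
    define m where "m = 1 / real W"
    have m: "0 < m" using W by (simp add: m_def)
    have "S p \<le> (\<Sum>i<W. m powr \<alpha> * (1 + \<alpha> * (p i / m - 1)))"
      unfolding S_def using p m alpha
      by (intro sum_mono tangent_le) (auto simp: prob_simplex_def)
    also have "\<dots> = m powr \<alpha> * (real W + \<alpha> * ((\<Sum>i<W. p i) / m - real W))"
      by (simp add: sum_distrib_left sum.distrib sum_subtractf sum_divide_distrib[symmetric] algebra_simps)
    also have "\<dots> = S (\<lambda>i. 1 / real W)"
      using p W by (simp add: prob_simplex_def m_def S_def)
    finally have "S p \<le> S (\<lambda>i. 1 / real W)" .
    hence "lnG (S p) \<le> lnG (S (\<lambda>i. 1 / real W))"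
      using mono S_pos[OF p] unfolding S_def by blast
    thus "Z_G lnG \<alpha> W p \<le> Z_G lnG \<alpha> W (\<lambda>i. 1 / real W)"
      unfolding ZS using alpha by (simp add: divide_right_mono)
  }
  {
    fix p q and t :: real assume p: "p \<in> prob_simplex W" and q: "q \<in> prob_simplex W"
      and ex: "\<exists>i<W. p i \<noteq> q i" and t: "0 < t \<and> t < 1"
    have "t * S p + (1 - t) * S q = (\<Sum>i<W. t * p i powr \<alpha> + (1 - t) * q i powr \<alpha>)"
      unfolding S_def by (simp add: sum_distrib_left sum.distrib)
    also have "\<dots> < S (\<lambda>i. t * p i + (1 - t) * q i)"
      unfolding S_def using p q ex t alpha
      by (intro sum_strict_mono_ex1)
         (auto simp: prob_simplex_def intro!: powr_concave_le powr_strict_concave)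
    finally have lt: "t * S p + (1 - t) * S q < S (\<lambda>i. t * p i + (1 - t) * q i)" .
    have Sp: "0 < S p" and Sq: "0 < S q" using S_pos p q unfolding S_def by auto
    have pos: "0 < t * S p + (1 - t) * S q" using Sp Sq t
      by (smt (verit) mult_pos_pos)
    have "t * lnG (S p) + (1 - t) * lnG (S q) \<le> lnG (t * S p + (1 - t) * S q)"
    proof (cases "S p = S q")
      case True thus ?thesis by (simp add: algebra_simps)
    next
      case False thus ?thesis using conc Sp Sq t
        unfolding strict_concave_on_real_def by (auto intro: less_imp_le)
    qed
    also have "\<dots> < lnG (S (\<lambda>i. t * p i + (1 - t) * q i))"
      using incr lt pos by (auto simp: strict_mono_on_def)
    finally have "t * lnG (S p) + (1 - t) * lnG (S q) < lnG (S (\<lambda>i. t * p i + (1 - t) * q i))" .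
    hence "(t * lnG (S p) + (1 - t) * lnG (S q)) / (1 - \<alpha>) < lnG (S (\<lambda>i. t * p i + (1 - t) * q i)) / (1 - \<alpha>)"
      using alpha by (simp add: divide_strict_right_mono)
    thus "t * Z_G lnG \<alpha> W p + (1 - t) * Z_G lnG \<alpha> W q < Z_G lnG \<alpha> W (\<lambda>i. t * p i + (1 - t) * q i)"
      unfolding ZS by (simp add: add_divide_distrib)
  }
  {
    fix p assume p: "p \<in> prob_simplex W"
    have "(\<Sum>i<Suc W. (p(W := 0)) i powr \<alpha>) = (\<Sum>i<W. p i powr \<alpha>)"
      by (simp add: lessThan_Suc)
    thus "Z_G lnG \<alpha> (Suc W) (p(W := 0)) = Z_G lnG \<alpha> W p"
      unfolding Z_G_def by simp
  }
qed

end
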